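(* For the link two-relaxation-times scheme described in the context, under diffusive scaling ($\lambda=\mu/\Delta x$, $\mu>0$ fixed as $\Delta x\to0$), assuming $\epsilon_{2j}=\Delta x\tilde\epsilon_{2j}$ with $\tilde\epsilon_{2j}$ and $\epsilon_{2j+1}$ fixed as $\Delta x\to0$, and considering a local initialisation $w\in\mathbb{R}^q$ with $w_1=1$ and $w_{2j}=\Delta x\tilde w_{2j}$ with $\tilde w_{2j}$ (and $w_{2j+1}$) fixed as $\Delta x\to0$ for $j\in\{1,\dots,W\}$, the modified equation of the unique initialisation scheme $m_1(\Delta t,x)=(Ew)_1m_1^\circ(x)$ is, for $x\in\mathbb{R}^d$, \begin{align*} \partial_t\phi(0,x)&+\mu\sum_{j=1}^W\big(s\tilde\epsilon_{2j}+(1-s)\tilde w_{2j}\big)\sum_{|\mathfrak n|=1}c_{2j}^{\mathfrak n}\partial_x^{\mathfrak n}\phi(0,x)\\ &-\mu\sum_{j=1}^W\big((2-s)\epsilon_{2j+1}+(s-1)w_{2j+1}\big)\sum_{|\mathfrak n|=2}\frac{c_{2j}^{\mathfrak n}}{\mathfrak n!}\partial_x^{\mathfrak n}\phi(0,x)=O(\Delta x). \end{align*}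
   Context: Let $d\ge1$, $W\in\mathbb{N}^*$, $q=1+2W$. Velocities $c_1=0$, $c_{2j}=-c_{2j+1}\in\mathbb{Z}^d$, $j\in\{1,\dots,W\}$. Moment matrix $M$ with first row $(1,\dots,1)$ and, for each $j$, row $2j$ with entries $1,-1$ in columns $2j,2j+1$, row $2j+1$ with entries $1,1$ in columns $2j,2j+1$, zeros elsewhere. Relaxation matrix $S=\mathrm{diag}(s_1,\dots,s_q)$ with $s_{2j}=s\in(0,2]$ fixed, $s_{2j+1}=2-s$; equilibrium coefficients $\epsilon\in\mathbb{R}^q$, $\epsilon_1=1$; collision matrix $K=I-S(I-\epsilon e_1^T)$. $\Delta t=\Delta x/\lambda=\Delta x^2/\mu$. Shifts $(x_\ell\phi)(x)=\phi(x-\Delta xe_\ell)$, $x^c=\prod x_\ell^{c_\ell}$; transport matrix $T=M\mathrm{diag}(x^{c_1},\dots,x^{c_q})M^{-1}$, evolution matrix $E=TK$. Time shift $(z\phi)(t)=\phi(t+\Delta t)$. Multi-index notation $c^{\mathfrak n}=\prod c_\ell^{\mathfrak n_\ell}$, $\mathfrak n!=\prod\mathfrak n_\ell!$, $\partial_x^{\mathfrak n}=\prod\partial_{x_\ell}^{\mathfrak n_\ell}$. The initialisation is $m(0,x)=w\,m_1^\circ(x)$. The modified equation of the initialisation scheme is obtained by substituting a smooth $\phi$ into $(z\phi)(0,x)=((Ew)_1\phi(0,\cdot))(x)$, Taylor-expanding both sides in $\Delta x$, cancelling the leading term $\phi(0,x)$ and dividing by $\Delta t=\Delta x^2/\mu$.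 *)

theory Defs
  imports "HOL-Analysis.Analysis" "HOL-Library.Landau_Symbols"
begin

definition dirderiv :: "'a::real_normed_vector \<Rightarrow> ('a \<Rightarrow> real) \<Rightarrow> 'a \<Rightarrow> real" where
  "dirderiv v f y = deriv (\<lambda>h. f (y + h *\<^sub>R v)) 0"

definition smooth_fun :: "('a::euclidean_space \<Rightarrow> real) \<Rightarrow> bool" where
  "smooth_fun f \<longleftrightarrow>
     (\<forall>vs. set vs \<subseteq> Basis \<longrightarrow>
        continuous_on UNIV (foldr dirderiv vs f) \<and>
        (\<forall>v\<in>Basis. \<forall>y. (\<lambda>h. foldr dirderiv vs f (y + h *\<^sub>R v)) differentiable (at 0)))"

definition xpartial :: "'d::finite \<Rightarrow> (real^'d \<Rightarrow> real) \<Rightarrow> real^'d \<Rightarrow> real" where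
  "xpartial l f = dirderiv (axis l 1) f"

definition dvars :: "'d::finite list" where
  "dvars = (SOME xs. distinct xs \<and> set xs = UNIV)"

definition mpartial :: "('d::finite \<Rightarrow> nat) \<Rightarrow> (real^'d \<Rightarrow> real) \<Rightarrow> real^'d \<Rightarrow> real" where
  "mpartial n f = foldr (\<lambda>l g. (xpartial l ^^ n l) g) dvars f"

definition mindices :: "nat \<Rightarrow> ('d::finite \<Rightarrow> nat) set" where
  "mindices k = {n. (\<Sum>l\<in>UNIV. n l) = k}"

definition mpow :: "real^'d \<Rightarrow> ('d::finite \<Rightarrow> nat) \<Rightarrow> real" where
  "mpow c n = (\<Prod>l\<in>UNIV. (c $ l) ^ n l)"

definition mfact :: "('d::finite \<Rightarrow> nat) \<Rightarrow> real" where
  "mfact n = (\<Prod>l\<in>UNIV. fact (n l))"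

definition Mmat :: "nat \<Rightarrow> nat \<Rightarrow> nat \<Rightarrow> real" where
  "Mmat W k l =
    (if k \<in> {1..2*W+1} \<and> l \<in> {1..2*W+1} then
       (if k = 1 then 1
        else if even k then (if l = k then 1 else if l = k + 1 then -1 else 0)
        else (if l = k - 1 then 1 else if l = k then 1 else 0))
     else 0)"

definition mmul :: "nat \<Rightarrow> (nat \<Rightarrow> nat \<Rightarrow> real) \<Rightarrow> (nat \<Rightarrow> nat \<Rightarrow> real) \<Rightarrow> nat \<Rightarrow> nat \<Rightarrow> real" where
  "mmul W A B k l = (\<Sum>p=1..2*W+1. A k p * B p l)"

definition Minv :: "nat \<Rightarrow> nat \<Rightarrow> nat \<Rightarrow> real" where
  "Minv W = (THE N. (\<forall>k\<in>{1..2*W+1}. \<forall>l\<in>{1..2*W+1}.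
                       mmul W N (Mmat W) k l = (if k = l then 1 else 0)) \<and>
                    (\<forall>k l. k \<notin> {1..2*W+1} \<or> l \<notin> {1..2*W+1} \<longrightarrow> N k l = 0))"

text \<open>Collision matrix K = I - S (I - eps e_1^T), S = diag(sr).\<close>
definition Kmat :: "nat \<Rightarrow> (nat \<Rightarrow> real) \<Rightarrow> (nat \<Rightarrow> real) \<Rightarrow> nat \<Rightarrow> nat \<Rightarrow> real" where
  "Kmat W sr eps k l =
    (if k \<in> {1..2*W+1} \<and> l \<in> {1..2*W+1} then
       (if k = l then 1 else 0) - sr k * ((if k = l then 1 else 0) - eps k * (if l = 1 then 1 else 0))
     else 0)"

definition shift_op :: "real \<Rightarrow> real^'d \<Rightarrow> (real^'d \<Rightarrow> real) \<Rightarrow> real^'d \<Rightarrow> real" where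
  "shift_op dx v f y = f (y - dx *\<^sub>R v)"

text \<open>Entries of the transport matrix T = M diag(x^{c_1},...,x^{c_q}) M^{-1} (operators).\<close>
definition transport_op :: "nat \<Rightarrow> real \<Rightarrow> (nat \<Rightarrow> real^'d) \<Rightarrow> nat \<Rightarrow> nat \<Rightarrow>
    (real^'d \<Rightarrow> real) \<Rightarrow> real^'d \<Rightarrow> real" where
  "transport_op W dx c k m f y =
     (\<Sum>p=1..2*W+1. Mmat W k p * Minv W p m * shift_op dx (c p) f y)"

text \<open>Entries of the evolution matrix E = T K.\<close>
definition evol_op :: "nat \<Rightarrow> real \<Rightarrow> (nat \<Rightarrow> real^'d) \<Rightarrow> (nat \<Rightarrow> real) \<Rightarrow> (nat \<Rightarrow> real) \<Rightarrow>
    nat \<Rightarrow> nat \<Rightarrow> (real^'d \<Rightarrow> real) \<Rightarrow> real^'d \<Rightarrow> real" where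
  "evol_op W dx c sr eps k l f y =
     (\<Sum>m=1..2*W+1. Kmat W sr eps m l * transport_op W dx c k m f y)"

definition Ew_op :: "nat \<Rightarrow> real \<Rightarrow> (nat \<Rightarrow> real^'d) \<Rightarrow> (nat \<Rightarrow> real) \<Rightarrow> (nat \<Rightarrow> real) \<Rightarrow>
    (nat \<Rightarrow> real) \<Rightarrow> nat \<Rightarrow> (real^'d \<Rightarrow> real) \<Rightarrow> real^'d \<Rightarrow> real" where
  "Ew_op W dx c sr eps w k f y = (\<Sum>l=1..2*W+1. w l * evol_op W dx c sr eps k l f y)"

end

theory Submission
  imports Defs
begin
lemma sum_split_oe:
  fixes h :: "nat \<Rightarrow> 'a::comm_monoid_add"
  shows "(\<Sum>p=1..2*W+1. h p) = h 1 + (\<Sum>j=1..W. h (2*j) + h (2*j+1))"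
proof (induction W)
  case 0 then show ?case by simp
next
  case (Suc W)
  have "{1..2*Suc W+1} = insert (Suc (Suc (Suc (2*W)))) (insert (Suc (Suc (2*W))) {1..2*W+1})" by auto
  then have "(\<Sum>p=1..2*Suc W+1. h p) = h (Suc (Suc (Suc (2*W)))) + (h (Suc (Suc (2*W))) + (\<Sum>p=1..2*W+1. h p))"
    by simp
  also have "\<dots> = h 1 + (\<Sum>j=1..Suc W. h (2*j) + h (2*j+1))"
    using Suc by (simp add: ac_simps)
  finally show ?case .
qed

definition N0 :: "nat \<Rightarrow> nat \<Rightarrow> nat \<Rightarrow> real" where
  "N0 W p m = (if p \<in> {1..2*W+1} \<and> m \<in> {1..2*W+1} then
     (if p = 1 then (if m = 1 then 1 else if odd m then -1 else 0)
      else if even p then (if m = p \<or> m = p+1 then 1/2 else 0)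
      else (if m = p then 1/2 else if m = p - 1 then -1/2 else 0)) else 0)"

lemma two_neq_odd[simp]: "(2*i = Suc (2*j)) = False" "(Suc (2*j) = 2*i) = False"
  "(2*i = Suc (Suc (Suc (2*j)))) = False" "(Suc (Suc (Suc (2*j))) = 2*i) = False" for i j :: nat
  by presburger+

lemma if0_mult_if0: "(if P then a else 0) * (if Q then b else (0::real)) = (if P \<and> Q then a*b else 0)" by auto

lemma sum_if_eq2: "finite S \<Longrightarrow> (\<Sum>j\<in>S. if j = a \<and> b = j then f j else 0) = (if a = b \<and> a \<in> S then f a else (0::real))"
proof -
  assume "finite S"
  have "(\<lambda>j. if j = a \<and> b = j then f j else 0) = (\<lambda>j. if j = a then (if a = b then f j else 0) else 0)" by auto
  then have "(\<Sum>j\<in>S. if j = a \<and> b = j then f j else 0) = (\<Sum>j\<in>S. if j = a then (if a = b then f j else 0) else 0)" by (rule arg_cong[of _ _ "\<lambda>g. sum g S"])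
  also have "\<dots> = (if a \<in> S then (if a = b then f a else 0) else 0)" using \<open>finite S\<close> by (rule sum.delta)
  finally show ?thesis by auto
qed

lemma idx_cases:
  fixes k :: nat
  assumes "k \<in> {1..2*W+1}"
  obtains "k = 1" | i where "i \<in> {1..W}" "k = 2*i" | i where "i \<in> {1..W}" "k = 2*i+1"
proof -
  consider "k = 1" | "even k" "k \<ge> 2" | "odd k" "k \<ge> 3" proof -
    have "k = 1 \<or> (even k \<and> k \<ge> 2) \<or> (odd k \<and> k \<ge> 3)" using assms by simp presburger
    then show ?thesis using that by blast
  qed
  then show ?thesis
  proof cases
    case 1 then show ?thesis using that by auto
  next
    case 2 then obtain i where "k = 2*i" by auto
    then show ?thesis using that(2)[of i] 2 assms by auto
  next
    case 3 then obtain i where "k = 2*i+1" by (metis oddE)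
    then show ?thesis using that(3)[of i] 3 assms by auto
  qed
qed

lemma N0M: assumes "k \<in> {1..2*W+1}" "l \<in> {1..2*W+1}"
  shows "mmul W (N0 W) (Mmat W) k l = (if k = l then 1 else 0)"
  using assms(1)
proof (cases rule: idx_cases)
  case 1
  show ?thesis using assms(2)
  proof (cases rule: idx_cases)
    case 1 then show ?thesis using \<open>k=1\<close> unfolding mmul_def sum_split_oe by (simp add: N0_def Mmat_def sum_if_eq2 sum.distrib sum_negf if0_mult_if0 sum_distrib_left[symmetric] if_distrib[of uminus] cong: if_cong)
  next
    case (2 i) then show ?thesis using \<open>k=1\<close> unfolding mmul_def sum_split_oe by (simp add: N0_def Mmat_def sum_if_eq2 sum.distrib sum_negf if0_mult_if0 sum_distrib_left[symmetric] if_distrib[of uminus] cong: if_cong)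
  next
    case (3 i) then show ?thesis using \<open>k=1\<close> unfolding mmul_def sum_split_oe by (simp add: N0_def Mmat_def sum_if_eq2 sum.distrib sum_negf if0_mult_if0 sum_distrib_left[symmetric] if_distrib[of uminus] cong: if_cong)
  qed
next
  case (2 i')
  show ?thesis using assms(2)
  proof (cases rule: idx_cases)
    case 1 then show ?thesis using 2 unfolding mmul_def sum_split_oe by (simp add: N0_def Mmat_def sum_if_eq2 sum.distrib sum_negf if0_mult_if0 sum_distrib_left[symmetric] if_distrib[of uminus] cong: if_cong)
  next
    case (2 i) then show ?thesis using \<open>k=2*i'\<close> \<open>i' \<in> _\<close> unfolding mmul_def sum_split_oe by (simp add: N0_def Mmat_def sum_if_eq2 sum.distrib sum_negf if0_mult_if0 sum_distrib_left[symmetric] if_distrib[of uminus] cong: if_cong)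
  next
    case (3 i) then show ?thesis using \<open>k=2*i'\<close> \<open>i' \<in> _\<close> unfolding mmul_def sum_split_oe by (simp add: N0_def Mmat_def sum_if_eq2 sum.distrib sum_negf if0_mult_if0 sum_distrib_left[symmetric] if_distrib[of uminus] cong: if_cong)
  qed
next
  case (3 i')
  show ?thesis using assms(2)
  proof (cases rule: idx_cases)
    case 1 then show ?thesis using 3 unfolding mmul_def sum_split_oe by (simp add: N0_def Mmat_def sum_if_eq2 sum.distrib sum_negf if0_mult_if0 sum_distrib_left[symmetric] if_distrib[of uminus] cong: if_cong)
  next
    case (2 i) then show ?thesis using \<open>k=2*i'+1\<close> \<open>i' \<in> _\<close> unfolding mmul_def sum_split_oe by (simp add: N0_def Mmat_def sum_if_eq2 sum.distrib sum_negf if0_mult_if0 sum_distrib_left[symmetric] if_distrib[of uminus] cong: if_cong)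
  next
    case (3 i) then show ?thesis using \<open>k=2*i'+1\<close> \<open>i' \<in> _\<close> unfolding mmul_def sum_split_oe by (simp add: N0_def Mmat_def sum_if_eq2 sum.distrib sum_negf if0_mult_if0 sum_distrib_left[symmetric] if_distrib[of uminus] cong: if_cong)
  qed
qed

lemma MN0: assumes "k \<in> {1..2*W+1}" "l \<in> {1..2*W+1}"
  shows "mmul W (Mmat W) (N0 W) k l = (if k = l then 1 else 0)"
  using assms(1)
proof (cases rule: idx_cases)
  case 1
  show ?thesis using assms(2)
  proof (cases rule: idx_cases)
    case 1 then show ?thesis using \<open>k=1\<close> unfolding mmul_def sum_split_oe by (simp add: N0_def Mmat_def sum_if_eq2 sum.distrib sum_negf if0_mult_if0 sum_distrib_left[symmetric] if_distrib[of uminus] cong: if_cong)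
  next
    case (2 i) then show ?thesis using \<open>k=1\<close> unfolding mmul_def sum_split_oe by (simp add: N0_def Mmat_def sum_if_eq2 sum.distrib sum_negf if0_mult_if0 sum_distrib_left[symmetric] if_distrib[of uminus] cong: if_cong)
  next
    case (3 i) then show ?thesis using \<open>k=1\<close> unfolding mmul_def sum_split_oe by (simp add: N0_def Mmat_def sum_if_eq2 sum.distrib sum_negf if0_mult_if0 sum_distrib_left[symmetric] if_distrib[of uminus] cong: if_cong)
  qed
next
  case (2 i')
  show ?thesis using assms(2)
  proof (cases rule: idx_cases)
    case 1 then show ?thesis using 2 unfolding mmul_def sum_split_oe by (simp add: N0_def Mmat_def sum_if_eq2 sum.distrib sum_negf if0_mult_if0 sum_distrib_left[symmetric] if_distrib[of uminus] cong: if_cong)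
  next
    case (2 i) then show ?thesis using \<open>k=2*i'\<close> \<open>i' \<in> _\<close> unfolding mmul_def sum_split_oe by (simp add: N0_def Mmat_def sum_if_eq2 sum.distrib sum_negf if0_mult_if0 sum_distrib_left[symmetric] if_distrib[of uminus] cong: if_cong)
  next
    case (3 i) then show ?thesis using \<open>k=2*i'\<close> \<open>i' \<in> _\<close> unfolding mmul_def sum_split_oe by (simp add: N0_def Mmat_def sum_if_eq2 sum.distrib sum_negf if0_mult_if0 sum_distrib_left[symmetric] if_distrib[of uminus] cong: if_cong)
  qed
next
  case (3 i')
  show ?thesis using assms(2)
  proof (cases rule: idx_cases)
    case 1 then show ?thesis using 3 unfolding mmul_def sum_split_oe by (simp add: N0_def Mmat_def sum_if_eq2 sum.distrib sum_negf if0_mult_if0 sum_distrib_left[symmetric] if_distrib[of uminus] cong: if_cong)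
  next
    case (2 i) then show ?thesis using \<open>k=2*i'+1\<close> \<open>i' \<in> _\<close> unfolding mmul_def sum_split_oe by (simp add: N0_def Mmat_def sum_if_eq2 sum.distrib sum_negf if0_mult_if0 sum_distrib_left[symmetric] if_distrib[of uminus] cong: if_cong)
  next
    case (3 i) then show ?thesis using \<open>k=2*i'+1\<close> \<open>i' \<in> _\<close> unfolding mmul_def sum_split_oe by (simp add: N0_def Mmat_def sum_if_eq2 sum.distrib sum_negf if0_mult_if0 sum_distrib_left[symmetric] if_distrib[of uminus] cong: if_cong)
  qed
qed


lemma Minv_eq: "Minv W = N0 W"
  unfolding Minv_def
proof (rule the_equality)
  show "(\<forall>k\<in>{1..2 * W + 1}. \<forall>l\<in>{1..2 * W + 1}. mmul W (N0 W) (Mmat W) k l = (if k = l then 1 else 0)) \<and>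
    (\<forall>k l. k \<notin> {1..2 * W + 1} \<or> l \<notin> {1..2 * W + 1} \<longrightarrow> N0 W k l = 0)"
    using N0M by (auto simp: N0_def)
next
  fix N assume H: "(\<forall>k\<in>{1..2 * W + 1}. \<forall>l\<in>{1..2 * W + 1}. mmul W N (Mmat W) k l = (if k = l then 1 else 0)) \<and>
    (\<forall>k l. k \<notin> {1..2 * W + 1} \<or> l \<notin> {1..2 * W + 1} \<longrightarrow> N k l = 0)"
  show "N = N0 W"
  proof (intro ext)
    fix k l
    show "N k l = N0 W k l"
    proof (cases "k \<in> {1..2*W+1} \<and> l \<in> {1..2*W+1}")
      case False then show ?thesis using H by (auto simp: N0_def)
    next
      case True
      have "N k l = (\<Sum>p=1..2*W+1. N k p * (if p = l then 1 else 0))"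
        using True by (simp add: if_distrib[of "\<lambda>x. _ * x"] sum.delta cong: if_cong)
      also have "\<dots> = (\<Sum>p=1..2*W+1. N k p * mmul W (Mmat W) (N0 W) p l)"
        using True MN0 by (intro sum.cong) auto
      also have "\<dots> = (\<Sum>q=1..2*W+1. mmul W N (Mmat W) k q * N0 W q l)"
        unfolding mmul_def sum_distrib_left sum_distrib_right
        by (subst sum.swap) (simp add: mult_ac)
      also have "\<dots> = (\<Sum>q=1..2*W+1. (if k = q then 1 else 0) * N0 W q l)"
        using True H by (intro sum.cong) auto
      also have "\<dots> = (\<Sum>q=1..2*W+1. if k = q then N0 W q l else 0)"
        by (intro sum.cong) auto
      also have "\<dots> = N0 W k l" using True by (simp add: sum.delta)
      finally show ?thesis .
    qed
  qed
qed

lemma N0_row1: "(\<Sum>m=1..2*W+1. N0 W 1 m * u m) = u 1 - (\<Sum>j=1..W. u (2*j+1))"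
  unfolding sum_split_oe by (simp add: N0_def sum.distrib sum_negf)

lemma N0_row_even: "i \<in> {1..W} \<Longrightarrow> (\<Sum>m=1..2*W+1. N0 W (2*i) m * u m) = (u (2*i) + u (2*i+1)) / 2"
  unfolding sum_split_oe by (simp add: N0_def sum.distrib sum_negf if_distrib[of "\<lambda>x. x * _"] sum.delta cong: if_cong)

lemma N0_row_odd: "i \<in> {1..W} \<Longrightarrow> (\<Sum>m=1..2*W+1. N0 W (2*i+1) m * u m) = (u (2*i+1) - u (2*i)) / 2"
  unfolding sum_split_oe by (simp add: N0_def sum.distrib sum_negf if_distrib[of "\<lambda>x. x * _"] sum.delta cong: if_cong)

lemma Kw: "m \<in> {1..2*W+1} \<Longrightarrow> 1 \<in> {1..2*W+1} \<Longrightarrow>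
  (\<Sum>l=1..2*W+1. w l * Kmat W sr eps m l) = w m - sr m * (w m - eps m * w 1)"
proof -
  assume a: "m \<in> {1..2*W+1}" "1 \<in> {1..2*W+1}"
  have "(\<Sum>l=1..2*W+1. w l * Kmat W sr eps m l) = (\<Sum>l=1..2*W+1. (if l = m then w l else 0) * (1 - sr m) + (if l = 1 then w l else 0) * (sr m * eps m))"
    using a by (intro sum.cong) (auto simp: Kmat_def algebra_simps)
  also have "\<dots> = w m * (1 - sr m) + w 1 * (sr m * eps m)"
    using a by (simp add: sum.distrib sum_distrib_right[symmetric] sum.delta' del: One_nat_def)
  finally show ?thesis by (simp add: algebra_simps)
qed

lemma sum_swap3: "(\<Sum>l\<in>A. \<Sum>m\<in>B. \<Sum>p\<in>C. X l m p) = (\<Sum>p\<in>C. \<Sum>m\<in>B. \<Sum>l\<in>A. X l m p)"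
proof -
  have "(\<Sum>l\<in>A. \<Sum>m\<in>B. \<Sum>p\<in>C. X l m p) = (\<Sum>m\<in>B. \<Sum>l\<in>A. \<Sum>p\<in>C. X l m p)" by (rule sum.swap)
  also have "\<dots> = (\<Sum>m\<in>B. \<Sum>p\<in>C. \<Sum>l\<in>A. X l m p)" by (intro sum.cong refl sum.swap)
  also have "\<dots> = (\<Sum>p\<in>C. \<Sum>m\<in>B. \<Sum>l\<in>A. X l m p)" by (rule sum.swap)
  finally show ?thesis .
qed

lemma Ew_formula:
  fixes f :: "real^'d \<Rightarrow> real" and w sr eps :: "nat \<Rightarrow> real"
  defines "u \<equiv> \<lambda>m. w m - sr m * (w m - eps m * w 1)"
  shows "Ew_op W dx c sr eps w 1 f y =
    f (y - dx *\<^sub>R c 1) * (u 1 - (\<Sum>j=1..W. u (2*j+1))) +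
    (\<Sum>j=1..W. f (y - dx *\<^sub>R c (2*j)) * ((u (2*j) + u (2*j+1)) / 2)
              + f (y - dx *\<^sub>R c (2*j+1)) * ((u (2*j+1) - u (2*j)) / 2))"
proof -
  let ?R = "{1..2*W+1}"
  let ?sh = "\<lambda>p. f (y - dx *\<^sub>R c p)"
  have "Ew_op W dx c sr eps w 1 f y =
     (\<Sum>l\<in>?R. \<Sum>m\<in>?R. \<Sum>p\<in>?R. w l * Kmat W sr eps m l * Mmat W 1 p * Minv W p m * ?sh p)"
    unfolding Ew_op_def evol_op_def transport_op_def shift_op_def sum_distrib_left
    by (simp add: mult_ac)
  also have "\<dots> = (\<Sum>p\<in>?R. ?sh p * Mmat W 1 p * (\<Sum>m\<in>?R. Minv W p m * (\<Sum>l\<in>?R. w l * Kmat W sr eps m l)))"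
  proof -
    have e1: "(\<Sum>l\<in>?R. \<Sum>m\<in>?R. \<Sum>p\<in>?R. w l * Kmat W sr eps m l * Mmat W 1 p * Minv W p m * ?sh p)
      = (\<Sum>p\<in>?R. \<Sum>m\<in>?R. \<Sum>l\<in>?R. w l * Kmat W sr eps m l * Mmat W 1 p * Minv W p m * ?sh p)"
      by (rule sum_swap3)
    have e2: "(\<Sum>p\<in>?R. ?sh p * Mmat W 1 p * (\<Sum>m\<in>?R. Minv W p m * (\<Sum>l\<in>?R. w l * Kmat W sr eps m l)))
      = (\<Sum>p\<in>?R. \<Sum>m\<in>?R. \<Sum>l\<in>?R. ?sh p * Mmat W 1 p * (Minv W p m * (w l * Kmat W sr eps m l)))"
      by (simp only: sum_distrib_left)
    have e3: "\<And>p m l. w l * Kmat W sr eps m l * Mmat W 1 p * Minv W p m * ?sh p = ?sh p * Mmat W 1 p * (Minv W p m * (w l * Kmat W sr eps m l))"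
      by (simp only: mult_ac)
    show ?thesis unfolding e2 e3 by (rule sum_swap3)
  qed
  also have "\<dots> = (\<Sum>p\<in>?R. ?sh p * (\<Sum>m\<in>?R. N0 W p m * u m))"
  proof (rule sum.cong[OF refl])
    fix p assume p: "p \<in> ?R"
    have "(\<Sum>m\<in>?R. Minv W p m * (\<Sum>l\<in>?R. w l * Kmat W sr eps m l)) = (\<Sum>m\<in>?R. N0 W p m * u m)"
    proof (rule sum.cong[OF refl])
      fix m assume m: "m \<in> ?R"
      show "Minv W p m * (\<Sum>l\<in>?R. w l * Kmat W sr eps m l) = N0 W p m * u m"
        using Kw[OF m] unfolding Minv_eq u_def by simp
    qed
    moreover have "Mmat W 1 p = 1" using p by (simp add: Mmat_def)
    ultimately show "?sh p * Mmat W 1 p * (\<Sum>m\<in>?R. Minv W p m * (\<Sum>l\<in>?R. w l * Kmat W sr eps m l)) = ?sh p * (\<Sum>m\<in>?R. N0 W p m * u m)"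
      by simp
  qed
  also have "\<dots> = ?sh 1 * (u 1 - (\<Sum>j=1..W. u (2*j+1))) +
    (\<Sum>j=1..W. ?sh (2*j) * ((u (2*j) + u (2*j+1)) / 2) + ?sh (2*j+1) * ((u (2*j+1) - u (2*j)) / 2))"
  proof -
    have "(\<Sum>p\<in>?R. ?sh p * (\<Sum>m\<in>?R. N0 W p m * u m)) = ?sh 1 * (\<Sum>m\<in>?R. N0 W 1 m * u m)
       + (\<Sum>j=1..W. ?sh (2*j) * (\<Sum>m\<in>?R. N0 W (2*j) m * u m) + ?sh (2*j+1) * (\<Sum>m\<in>?R. N0 W (2*j+1) m * u m))"
      by (rule sum_split_oe)
    also have "\<dots> = ?sh 1 * (u 1 - (\<Sum>j=1..W. u (2*j+1))) +
    (\<Sum>j=1..W. ?sh (2*j) * ((u (2*j) + u (2*j+1)) / 2) + ?sh (2*j+1) * ((u (2*j+1) - u (2*j)) / 2))"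
      unfolding N0_row1 by (intro arg_cong2[where f="(+)"] refl sum.cong) (simp_all only: N0_row_even N0_row_odd)
    finally show ?thesis .
  qed
  finally show ?thesis .
qed

lemma line_deriv:
  fixes G :: "'a::real_normed_vector \<Rightarrow> real"
  assumes "\<forall>y. (\<lambda>h. G (y + h *\<^sub>R v)) differentiable (at 0)"
  shows "((\<lambda>t. G (z + t *\<^sub>R v)) has_real_derivative dirderiv v G (z + t *\<^sub>R v)) (at t)"
proof -
  let ?y = "z + t *\<^sub>R v"
  have "((\<lambda>h. G (?y + h *\<^sub>R v)) has_real_derivative dirderiv v G ?y) (at 0)"
    using assms unfolding dirderiv_def by (simp add: DERIV_deriv_iff_real_differentiable)
  then have "((\<lambda>h. G (?y + h *\<^sub>R v)) has_real_derivative dirderiv v G ?y) (at (t + - t))" by simp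
  then have "((\<lambda>s. G (?y + (s + - t) *\<^sub>R v)) has_real_derivative dirderiv v G ?y) (at t)"
    by (subst (asm) DERIV_shift) simp
  moreover have "(\<lambda>s. G (?y + (s + - t) *\<^sub>R v)) = (\<lambda>s. G (z + s *\<^sub>R v))"
    by (rule ext) (simp add: algebra_simps)
  ultimately show ?thesis by simp
qed

lemma MVT_any:
  assumes "\<And>x. (f has_real_derivative f' x) (at x)"
  shows "\<exists>\<xi>. \<bar>\<xi> - a\<bar> \<le> \<bar>b - a\<bar> \<and> f b - f a = (b - a) * f' \<xi>"
proof (cases a b rule: linorder_cases)
  case less
  then obtain z where "a < z" "z < b" "f b - f a = (b - a) * f' z" using MVT2[of a b f f'] assms by blast
  then show ?thesis by (intro exI[of _ z]) auto
next
  case equal then show ?thesis by auto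
next
  case greater
  then obtain z where "b < z" "z < a" "f a - f b = (a - b) * f' z" using MVT2[of b a f f'] assms by blast
  then show ?thesis by (intro exI[of _ z]) (auto simp: algebra_simps)
qed

lemma norm_le_compwise:
  fixes a b :: "real^'d"
  assumes "\<And>l. \<bar>a$l\<bar> \<le> \<bar>b$l\<bar>"
  shows "norm a \<le> norm b"
  unfolding norm_vec_def by (rule L2_set_mono) (use assms in auto)

lemma C1_frechet:
  fixes G :: "real^'d \<Rightarrow> real"
  assumes diff: "\<forall>l y. (\<lambda>h. G (y + h *\<^sub>R axis l 1)) differentiable (at 0)"
    and cont: "\<forall>l. continuous_on UNIV (xpartial l G)"
  shows "(G has_derivative (\<lambda>v. \<Sum>l\<in>UNIV. v$l * xpartial l G y)) (at y)"
proof -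
  have dax: "((\<lambda>s. G (z + s *\<^sub>R axis l 1)) has_real_derivative xpartial l G (z + s *\<^sub>R axis l 1)) (at s)" for l z s
    unfolding xpartial_def using line_deriv[of G "axis l 1"] diff by blast
  have bl: "bounded_linear (\<lambda>v. \<Sum>l\<in>UNIV. v$l * xpartial l G y)"
    by (auto intro!: bounded_linear_intros)
  show ?thesis unfolding has_derivative_at_alt
  proof (intro conjI allI impI bl)
    fix e :: real assume e: "e > 0"
    define e' where "e' = e / real CARD('d)"
    have e'pos: "e' > 0" using e by (simp add: e'_def)
    have "\<forall>l. \<exists>d>0. \<forall>z. dist z y < d \<longrightarrow> dist (xpartial l G z) (xpartial l G y) < e'"
      using cont e'pos unfolding continuous_on_iff by blast
    then obtain D where D: "\<forall>l. D l > 0 \<and> (\<forall>z. dist z y < D l \<longrightarrow> dist (xpartial l G z) (xpartial l G y) < e')"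
      by metis
    define d where "d = Min (range D)"
    have dpos: "d > 0" using D by (simp add: d_def)
    have dle: "\<And>l. d \<le> D l" by (simp add: d_def)
    have close: "\<bar>xpartial l G z - xpartial l G y\<bar> < e'" if "norm (z - y) < d" for l z
    proof -
      have "dist z y < D l" using that dle[of l] by (simp add: dist_norm)
      then show ?thesis using D by (simp add: dist_real_def)
    qed
    have claim: "\<forall>v. (\<forall>l. l \<notin> S \<longrightarrow> v$l = 0) \<longrightarrow> norm v < d \<longrightarrow>
        \<bar>G (y + v) - G y - (\<Sum>l\<in>S. v$l * xpartial l G y)\<bar> \<le> real (card S) * e' * norm v"
      if "finite S" for S
      using that
    proof (induction S rule: finite_induct)
      case empty
      show ?case
      proof (intro allI impI)
        fix v :: "real^'d" assume "\<forall>l. l \<notin> {} \<longrightarrow> v$l = 0"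
        then have "v = 0" by (simp add: vec_eq_iff)
        then show "\<bar>G (y + v) - G y - (\<Sum>l\<in>{}. v$l * xpartial l G y)\<bar> \<le> real (card {}) * e' * norm v" by simp
      qed
    next
      case (insert k S)
      show ?case
      proof (intro allI impI)
        fix v :: "real^'d" assume supp: "\<forall>l. l \<notin> insert k S \<longrightarrow> v$l = 0" and nv: "norm v < d"
        define v' where "v' = v - (v$k) *\<^sub>R axis k 1"
        have v'c: "\<And>l. v'$l = (if l = k then 0 else v$l)" by (simp add: v'_def axis_def)
        have supp': "\<forall>l. l \<notin> S \<longrightarrow> v'$l = 0" using supp v'c by auto
        have nv': "norm v' \<le> norm v" by (rule norm_le_compwise) (simp add: v'c)
        have IH: "\<bar>G (y + v') - G y - (\<Sum>l\<in>S. v'$l * xpartial l G y)\<bar> \<le> real (card S) * e' * norm v'"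
          using insert.IH supp' nv' nv by auto
        have sumeq: "(\<Sum>l\<in>S. v'$l * xpartial l G y) = (\<Sum>l\<in>S. v$l * xpartial l G y)"
          using insert.hyps(2) v'c by (intro sum.cong) auto
        obtain \<xi> where xi: "\<bar>\<xi> - 0\<bar> \<le> \<bar>v$k - 0\<bar>" and
          mvt: "G (y + v' + (v$k) *\<^sub>R axis k 1) - G (y + v' + 0 *\<^sub>R axis k 1) = (v$k - 0) * xpartial k G (y + v' + \<xi> *\<^sub>R axis k 1)"
          using MVT_any[of "\<lambda>s. G (y + v' + s *\<^sub>R axis k 1)" "\<lambda>s. xpartial k G (y + v' + s *\<^sub>R axis k 1)" 0 "v$k"] dax
          by blast
        have yv: "y + v' + (v$k) *\<^sub>R axis k 1 = y + v" by (simp add: v'_def)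
        have "norm ((y + v' + \<xi> *\<^sub>R axis k 1) - y) \<le> norm v"
          by (rule norm_le_compwise) (use xi in \<open>auto simp: v'c axis_def\<close>)
        then have "\<bar>xpartial k G (y + v' + \<xi> *\<^sub>R axis k 1) - xpartial k G y\<bar> < e'"
          using close nv by fastforce
        then have "\<bar>v$k\<bar> * \<bar>xpartial k G (y + v' + \<xi> *\<^sub>R axis k 1) - xpartial k G y\<bar> \<le> \<bar>v$k\<bar> * e'"
          by (intro mult_left_mono) auto
        then have A: "\<bar>G (y + v) - G (y + v') - v$k * xpartial k G y\<bar> \<le> \<bar>v$k\<bar> * e'"
        proof -
          have "G (y + v) - G (y + v') = v$k * xpartial k G (y + v' + \<xi> *\<^sub>R axis k 1)"
            using mvt unfolding yv by simp
          then have "G (y + v) - G (y + v') - v$k * xpartial k G y = v$k * (xpartial k G (y + v' + \<xi> *\<^sub>R axis k 1) - xpartial k G y)"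
            by (simp add: algebra_simps)
          then show ?thesis using \<open>\<bar>v$k\<bar> * _ \<le> _\<close> by (simp add: abs_mult)
        qed
        have B: "\<bar>v$k\<bar> \<le> norm v" by (rule component_le_norm_cart)
        have "\<bar>G (y + v) - G y - (\<Sum>l\<in>insert k S. v$l * xpartial l G y)\<bar>
            \<le> \<bar>G (y + v) - G (y + v') - v$k * xpartial k G y\<bar> + \<bar>G (y + v') - G y - (\<Sum>l\<in>S. v'$l * xpartial l G y)\<bar>"
          using insert.hyps sumeq by simp
        also have "\<dots> \<le> \<bar>v$k\<bar> * e' + real (card S) * e' * norm v'" using A IH by linarith
        also have "\<dots> \<le> norm v * e' + real (card S) * e' * norm v"
          using B nv' e'pos by (intro add_mono mult_right_mono mult_left_mono) auto
        also have "\<dots> = real (card (insert k S)) * e' * norm v" using insert.hyps by (simp add: algebra_simps)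
        finally show "\<bar>G (y + v) - G y - (\<Sum>l\<in>insert k S. v$l * xpartial l G y)\<bar> \<le> real (card (insert k S)) * e' * norm v" .
      qed
    qed
    show "\<exists>d>0. \<forall>y'. norm (y' - y) < d \<longrightarrow>
        norm (G y' - G y - (\<Sum>l\<in>UNIV. (y' - y)$l * xpartial l G y)) \<le> e * norm (y' - y)"
    proof (intro exI[of _ d] conjI allI impI dpos)
      fix y' :: "real^'d" assume "norm (y' - y) < d"
      then have "\<bar>G (y + (y' - y)) - G y - (\<Sum>l\<in>UNIV. (y' - y)$l * xpartial l G y)\<bar> \<le> real (card (UNIV::'d set)) * e' * norm (y' - y)"
        using claim[of UNIV] by auto
      moreover have "real (card (UNIV::'d set)) * e' = e" by (simp add: e'_def)
      ultimately show "norm (G y' - G y - (\<Sum>l\<in>UNIV. (y' - y)$l * xpartial l G y)) \<le> e * norm (y' - y)"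
        by simp
    qed
  qed
qed

lemma C1_line:
  fixes G :: "real^'d \<Rightarrow> real"
  assumes diff: "\<forall>l y. (\<lambda>h. G (y + h *\<^sub>R axis l 1)) differentiable (at 0)"
    and cont: "\<forall>l. continuous_on UNIV (xpartial l G)"
  shows "((\<lambda>t. G (z + t *\<^sub>R c)) has_real_derivative (\<Sum>l\<in>UNIV. c$l * xpartial l G (z + t *\<^sub>R c))) (at t)"
proof -
  have d1: "((\<lambda>t. z + t *\<^sub>R c) has_derivative (\<lambda>h. h *\<^sub>R c)) (at t)"
    by (auto intro!: derivative_eq_intros)
  have "((\<lambda>t. G (z + t *\<^sub>R c)) has_derivative (\<lambda>h. \<Sum>l\<in>UNIV. (h *\<^sub>R c)$l * xpartial l G (z + t *\<^sub>R c))) (at t)"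
    using has_derivative_compose[OF d1 C1_frechet[OF diff cont]] by (simp add: o_def)
  moreover have "(\<lambda>h. \<Sum>l\<in>UNIV. (h *\<^sub>R c)$l * xpartial l G (z + t *\<^sub>R c)) = (*) (\<Sum>l\<in>UNIV. c$l * xpartial l G (z + t *\<^sub>R c))"
    by (rule ext) (simp add: sum_distrib_left mult_ac)
  ultimately show ?thesis unfolding has_field_derivative_def by simp
qed

lemma schwarz_rep:
  fixes G :: "real^'d \<Rightarrow> real"
  assumes dG: "\<forall>l y. (\<lambda>h. G (y + h *\<^sub>R axis l 1)) differentiable (at 0)"
    and dP: "\<forall>l m y. (\<lambda>h. xpartial l G (y + h *\<^sub>R axis m 1)) differentiable (at 0)"
    and h: "h > 0"
  shows "\<exists>p. norm (p - z) \<le> 2*h \<and>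
    G (z + h *\<^sub>R axis a 1 + h *\<^sub>R axis b 1) - G (z + h *\<^sub>R axis a 1) - G (z + h *\<^sub>R axis b 1) + G z
      = h*h * xpartial b (xpartial a G) p"
proof -
  define ea :: "real^'d" where "ea = axis a 1"
  define eb :: "real^'d" where "eb = axis b 1"
  define \<phi>1 where "\<phi>1 t = G (z + h *\<^sub>R eb + t *\<^sub>R ea) - G (z + t *\<^sub>R ea)" for t
  have d\<phi>: "(\<phi>1 has_real_derivative (xpartial a G (z + h *\<^sub>R eb + t *\<^sub>R ea) - xpartial a G (z + t *\<^sub>R ea))) (at t)" for t
    unfolding \<phi>1_def xpartial_def ea_def using line_deriv[of G "axis a 1"] dG by (intro DERIV_diff) blast+
  obtain t1 where t1: "0 < t1" "t1 < h"
    "\<phi>1 h - \<phi>1 0 = (h - 0) * (xpartial a G (z + h *\<^sub>R eb + t1 *\<^sub>R ea) - xpartial a G (z + t1 *\<^sub>R ea))"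
    using MVT2[of 0 h \<phi>1 "\<lambda>t. xpartial a G (z + h *\<^sub>R eb + t *\<^sub>R ea) - xpartial a G (z + t *\<^sub>R ea)"] d\<phi> h by blast
  define \<psi> where "\<psi> s = xpartial a G (z + t1 *\<^sub>R ea + s *\<^sub>R eb)" for s
  have d\<psi>: "(\<psi> has_real_derivative xpartial b (xpartial a G) (z + t1 *\<^sub>R ea + s *\<^sub>R eb)) (at s)" for s
    using line_deriv[of "xpartial a G" "axis b 1" "z + t1 *\<^sub>R ea" s] dP unfolding \<psi>_def eb_def
    by (simp add: xpartial_def[of b])
  obtain s1 where s1: "0 < s1" "s1 < h"
    "\<psi> h - \<psi> 0 = (h - 0) * xpartial b (xpartial a G) (z + t1 *\<^sub>R ea + s1 *\<^sub>R eb)"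
    using MVT2[of 0 h \<psi> "\<lambda>s. xpartial b (xpartial a G) (z + t1 *\<^sub>R ea + s *\<^sub>R eb)"] d\<psi> h by blast
  have "norm ((z + t1 *\<^sub>R ea + s1 *\<^sub>R eb) - z) \<le> norm (t1 *\<^sub>R ea) + norm (s1 *\<^sub>R eb)"
    using norm_triangle_ineq[of "t1 *\<^sub>R ea" "s1 *\<^sub>R eb"] by simp
  also have "\<dots> \<le> 2 * h" using t1 s1 by (simp add: ea_def eb_def)
  finally have nrm: "norm ((z + t1 *\<^sub>R ea + s1 *\<^sub>R eb) - z) \<le> 2 * h" .
  have "G (z + h *\<^sub>R ea + h *\<^sub>R eb) - G (z + h *\<^sub>R ea) - G (z + h *\<^sub>R eb) + G z = \<phi>1 h - \<phi>1 0"
    unfolding \<phi>1_def by (simp add: ac_simps)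
  also have "\<dots> = h * (\<psi> h - \<psi> 0)" using t1(3) unfolding \<psi>_def by (simp add: ac_simps)
  also have "\<dots> = h * h * xpartial b (xpartial a G) (z + t1 *\<^sub>R ea + s1 *\<^sub>R eb)" using s1(3) by simp
  finally show ?thesis using nrm unfolding ea_def eb_def by blast
qed

lemma abs_contra:
  fixes a b c d :: real
  shows "\<bar>c - a\<bar> < \<bar>a - b\<bar>/2 \<Longrightarrow> \<bar>d - b\<bar> < \<bar>a - b\<bar>/2 \<Longrightarrow> d = c \<Longrightarrow> False"
  by (auto simp: abs_if split: if_split_asm)

lemma schwarz:
  fixes G :: "real^'d \<Rightarrow> real"
  assumes dG: "\<forall>l y. (\<lambda>h. G (y + h *\<^sub>R axis l 1)) differentiable (at 0)"
    and dP: "\<forall>l m y. (\<lambda>h. xpartial l G (y + h *\<^sub>R axis m 1)) differentiable (at 0)"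
    and cPP: "\<forall>l m. continuous_on UNIV (xpartial m (xpartial l G))"
  shows "xpartial l (xpartial m G) z = xpartial m (xpartial l G) z"
proof (rule ccontr)
  let ?A = "xpartial l (xpartial m G)" and ?B = "xpartial m (xpartial l G)"
  assume ne: "?A z \<noteq> ?B z"
  define \<epsilon> where "\<epsilon> = \<bar>?A z - ?B z\<bar> / 2"
  have epos: "\<epsilon> > 0" using ne by (simp add: \<epsilon>_def)
  obtain d1 where d1: "d1 > 0" "\<forall>p. dist p z < d1 \<longrightarrow> dist (?A p) (?A z) < \<epsilon>"
    using cPP epos unfolding continuous_on_iff by blast
  obtain d2 where d2: "d2 > 0" "\<forall>p. dist p z < d2 \<longrightarrow> dist (?B p) (?B z) < \<epsilon>"
    using cPP epos unfolding continuous_on_iff by blast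
  define h where "h = min d1 d2 / 4"
  have h: "h > 0" using d1 d2 by (simp add: h_def)
  obtain p where p: "norm (p - z) \<le> 2*h"
    "G (z + h *\<^sub>R axis l 1 + h *\<^sub>R axis m 1) - G (z + h *\<^sub>R axis l 1) - G (z + h *\<^sub>R axis m 1) + G z = h*h * ?B p"
    using schwarz_rep[OF dG dP h, of z l m] by blast
  obtain q where q: "norm (q - z) \<le> 2*h"
    "G (z + h *\<^sub>R axis m 1 + h *\<^sub>R axis l 1) - G (z + h *\<^sub>R axis m 1) - G (z + h *\<^sub>R axis l 1) + G z = h*h * ?A q"
    using schwarz_rep[OF dG dP h, of z m l] by blast
  have "G (z + h *\<^sub>R axis l 1 + h *\<^sub>R axis m 1) = G (z + h *\<^sub>R axis m 1 + h *\<^sub>R axis l 1)"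
    by (simp add: ac_simps)
  then have "h*h * ?B p = h*h * ?A q" using p(2) q(2) by linarith
  then have eq: "?B p = ?A q" using h by simp
  have "dist q z < d1" using q(1) d1 d2 by (simp add: dist_norm h_def)
  then have "\<bar>?A q - ?A z\<bar> < \<epsilon>" using d1 by (simp add: dist_real_def)
  moreover have "dist p z < d2" using p(1) d1 d2 by (simp add: dist_norm h_def)
  then have "\<bar>?B p - ?B z\<bar> < \<epsilon>" using d2 by (simp add: dist_real_def)
  ultimately show False using eq abs_contra unfolding \<epsilon>_def by blast
qed

lemma taylor3:
  fixes g g1 g2 g3 :: "real \<Rightarrow> real"
  assumes d1: "\<And>t. (g has_real_derivative g1 t) (at t)"
    and d2: "\<And>t. (g1 has_real_derivative g2 t) (at t)"
    and d3: "\<And>t. (g2 has_real_derivative g3 t) (at t)"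
    and c3: "continuous_on {-1..1} g3"
  shows "\<exists>M. \<forall>h. \<bar>h\<bar> \<le> 1 \<longrightarrow> \<bar>g h - g 0 - g1 0 * h - g2 0 * h^2 / 2\<bar> \<le> M * \<bar>h\<bar>^3"
proof -
  have "compact (g3 ` {-1..1})" by (rule compact_continuous_image[OF c3]) simp
  then obtain B where B: "\<forall>x\<in>g3 ` {-1..1}. norm x \<le> B" using compact_imp_bounded bounded_iff by metis
  define D where "D m = (if m = 0 then g else if m = 1 then g1 else if m = 2 then g2 else g3)" for m :: nat
  have DD: "\<forall>m t. m < 3 \<and> -1 \<le> t \<and> t \<le> 1 \<longrightarrow> (D m has_real_derivative D (Suc m) t) (at t)"
  proof (intro allI impI)
    fix m :: nat and t :: real assume "m < 3 \<and> -1 \<le> t \<and> t \<le> 1"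
    then have "m = 0 \<or> m = 1 \<or> m = 2" by auto
    then show "(D m has_real_derivative D (Suc m) t) (at t)" using d1 d2 d3 by (auto simp: D_def)
  qed
  show ?thesis
  proof (intro exI[of _ "B/6"] allI impI)
    fix h :: real assume h: "\<bar>h\<bar> \<le> 1"
    show "\<bar>g h - g 0 - g1 0 * h - g2 0 * h^2 / 2\<bar> \<le> B/6 * \<bar>h\<bar>^3"
    proof (cases "h = 0")
      case True then show ?thesis by simp
    next
      case False
      have D0: "D 0 = g" by (simp add: D_def)
      have "\<exists>t. (if h < 0 then h < t \<and> t < 0 else 0 < t \<and> t < h) \<and>
        g h = (\<Sum>m<3. (D m 0 / fact m) * (h - 0)^m) + (D 3 t / fact 3) * (h - 0)^3"
        using Taylor[of 3 D g "-1" 1 0 h, OF _ D0 DD] h False by auto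
      then obtain t where t: "(if h < 0 then h < t \<and> t < 0 else 0 < t \<and> t < h)"
        "g h = (\<Sum>m<3. (D m 0 / fact m) * (h - 0)^m) + (D 3 t / fact 3) * (h - 0)^3" by blast
      have tin: "t \<in> {-1..1}" using t(1) h by (auto split: if_splits)
      have "g h - g 0 - g1 0 * h - g2 0 * h^2 / 2 = g3 t / 6 * h^3"
        using t(2) by (simp add: D_def numeral_3_eq_3 fact_numeral power2_eq_square)
      then have "\<bar>g h - g 0 - g1 0 * h - g2 0 * h^2 / 2\<bar> = \<bar>g3 t / 6 * h^3\<bar>"
        by (rule arg_cong)
      also have "\<dots> = \<bar>g3 t\<bar> / 6 * \<bar>h\<bar>^3" by (simp add: abs_mult power_abs)
      also have "\<dots> \<le> B / 6 * \<bar>h\<bar>^3" using B tin by (intro mult_right_mono divide_right_mono) auto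
      finally show ?thesis .
    qed
  qed
qed

lemma basis_space: "((0::real), axis l (1::real)) \<in> (Basis :: (real \<times> (real^'d)) set)"
  by (auto simp: Basis_prod_def Basis_vec_def)

lemma basis_time: "((1::real), (0::real^'d)) \<in> (Basis :: (real \<times> (real^'d)) set)"
  by (auto simp: Basis_prod_def)

lemma foldr_rel:
  fixes \<phi> :: "real \<times> (real^'d) \<Rightarrow> real"
  shows "foldr xpartial vs (\<lambda>y. \<phi> (t, y)) y = foldr dirderiv (map (\<lambda>l. ((0::real), axis l (1::real))) vs) \<phi> (t, y)"
proof (induction vs arbitrary: y)
  case Nil then show ?case by simp
next
  case (Cons l vs)
  let ?\<Phi> = "foldr dirderiv (map (\<lambda>l. ((0::real), axis l (1::real))) vs) \<phi>"
  have e: "foldr xpartial vs (\<lambda>y. \<phi> (t, y)) = (\<lambda>y. ?\<Phi> (t, y))" using Cons by (rule ext)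
  have "foldr xpartial (l # vs) (\<lambda>y. \<phi> (t, y)) y = xpartial l (\<lambda>y. ?\<Phi> (t, y)) y" by (simp add: e)
  also have "\<dots> = dirderiv ((0::real), axis l (1::real)) ?\<Phi> (t, y)"
    unfolding xpartial_def dirderiv_def by simp
  finally show ?case by simp
qed

lemma F_smooth_diff:
  fixes \<phi> :: "real \<times> (real^'d) \<Rightarrow> real"
  assumes "smooth_fun \<phi>"
  shows "(\<lambda>h. foldr xpartial vs (\<lambda>y. \<phi> (0, y)) (y + h *\<^sub>R axis l 1)) differentiable (at 0)"
proof -
  let ?vs = "map (\<lambda>l. ((0::real), axis l (1::real))) vs"
  have "set ?vs \<subseteq> Basis" using basis_space by auto
  then have "(\<lambda>h. foldr dirderiv ?vs \<phi> ((0, y) + h *\<^sub>R ((0::real), axis l (1::real)))) differentiable (at 0)"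
    using assms basis_space unfolding smooth_fun_def by blast
  moreover have "\<And>h. (0::real, y) + h *\<^sub>R ((0::real), axis l (1::real)) = (0, y + h *\<^sub>R axis l 1)" by simp
  ultimately show ?thesis by (simp add: foldr_rel)
qed

lemma F_smooth_cont:
  fixes \<phi> :: "real \<times> (real^'d) \<Rightarrow> real"
  assumes "smooth_fun \<phi>"
  shows "continuous_on UNIV (foldr xpartial vs (\<lambda>y. \<phi> (0, y)))"
proof -
  let ?vs = "map (\<lambda>l. ((0::real), axis l (1::real))) vs"
  have "set ?vs \<subseteq> Basis" using basis_space by auto
  then have c: "continuous_on UNIV (foldr dirderiv ?vs \<phi>)" using assms unfolding smooth_fun_def by blast
  have "continuous_on UNIV (\<lambda>y::real^'d. foldr dirderiv ?vs \<phi> (0, y))"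
    by (rule continuous_on_compose2[OF c]) (auto intro!: continuous_intros)
  then show ?thesis by (simp add: foldr_rel[abs_def])
qed

lemma time_deriv:
  fixes \<phi> :: "real \<times> (real^'d) \<Rightarrow> real"
  assumes "smooth_fun \<phi>"
  shows "((\<lambda>t. foldr dirderiv (replicate k ((1::real), (0::real^'d))) \<phi> (t, x)) has_real_derivative
           foldr dirderiv (replicate (Suc k) ((1::real), (0::real^'d))) \<phi> (t, x)) (at t)"
proof -
  let ?vs = "replicate k ((1::real), (0::real^'d))"
  have "set ?vs \<subseteq> Basis" using basis_time by auto
  then have "\<forall>y. (\<lambda>h. foldr dirderiv ?vs \<phi> (y + h *\<^sub>R ((1::real), (0::real^'d)))) differentiable (at 0)"
    using assms basis_time unfolding smooth_fun_def by blast
  from line_deriv[OF this, of "(0, x)" t]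
  show ?thesis by simp
qed

lemma time_cont:
  fixes \<phi> :: "real \<times> (real^'d) \<Rightarrow> real"
  assumes "smooth_fun \<phi>"
  shows "continuous_on S (\<lambda>t. foldr dirderiv (replicate k ((1::real), (0::real^'d))) \<phi> (t, x))"
proof -
  let ?vs = "replicate k ((1::real), (0::real^'d))"
  have "set ?vs \<subseteq> Basis" using basis_time by auto
  then have c: "continuous_on UNIV (foldr dirderiv ?vs \<phi>)" using assms unfolding smooth_fun_def by blast
  show ?thesis
    by (rule continuous_on_compose2[OF c]) (auto intro!: continuous_intros)
qed

definition dl :: "'d \<Rightarrow> 'd \<Rightarrow> nat" where "dl l = (\<lambda>i. if i = l then 1 else 0)"

definition pr :: "'d \<Rightarrow> 'd \<Rightarrow> 'd \<Rightarrow> nat" where "pr l m = (\<lambda>i. dl l i + dl m i)"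

lemma dvars_props: "distinct (dvars :: 'd::finite list) \<and> set (dvars :: 'd list) = UNIV"
proof -
  have "\<exists>xs :: 'd list. distinct xs \<and> set xs = UNIV"
    using finite_distinct_list[of "UNIV :: 'd set"] by auto
  then show ?thesis unfolding dvars_def by (rule someI_ex)
qed

lemma foldr_zero:
  "\<forall>i\<in>set xs. n i = 0 \<Longrightarrow> foldr (\<lambda>l g. (xpartial l ^^ n l) g) xs F = F"
  by (induction xs) auto

lemma dvars_split:
  fixes l :: "'d::finite"
  obtains as bs where "(dvars :: 'd list) = as @ l # bs" "l \<notin> set as" "l \<notin> set bs" "distinct as" "distinct bs"
    "set as \<inter> set bs = {}"
proof -
  have "l \<in> set (dvars :: 'd list)" using dvars_props by auto
  then obtain as bs where "(dvars :: 'd list) = as @ l # bs" by (meson split_list)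
  moreover have "distinct (dvars :: 'd list)" using dvars_props by auto
  ultimately have "distinct (as @ l # bs)" by simp
  then have "l \<notin> set as" "l \<notin> set bs" "distinct as" "distinct bs" "set as \<inter> set bs = {}" by auto
  then show ?thesis by (rule that[OF \<open>dvars = as @ l # bs\<close>])
qed

lemma mpartial_single:
  fixes l :: "'d::finite"
  shows "mpartial (dl l) F = xpartial l F"
proof -
  obtain as bs where d: "(dvars :: 'd list) = as @ l # bs" "l \<notin> set as" "l \<notin> set bs"
    by (rule dvars_split)
  have z1: "\<forall>i\<in>set as. dl l i = 0" "\<forall>i\<in>set bs. dl l i = 0" using d by (auto simp: dl_def)
  show ?thesis unfolding mpartial_def d(1) foldr_append
    using foldr_zero[OF z1(1)] foldr_zero[OF z1(2)] by (simp add: dl_def)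
qed

lemma mpartial_pair:
  fixes l m :: "'d::finite"
  assumes sym: "xpartial l (xpartial m F) = xpartial m (xpartial l F)"
  shows "mpartial (pr l m) F = xpartial l (xpartial m F)"
proof (cases "l = m")
  case True
  obtain as bs where d: "(dvars :: 'd list) = as @ l # bs" "l \<notin> set as" "l \<notin> set bs"
    by (rule dvars_split)
  have z1: "\<forall>i\<in>set as. pr l m i = 0" "\<forall>i\<in>set bs. pr l m i = 0" using d True by (auto simp: pr_def dl_def)
  have "(xpartial l ^^ 2) F = xpartial l (xpartial l F)" by (simp add: numeral_2_eq_2)
  then show ?thesis unfolding mpartial_def d(1) foldr_append
    using foldr_zero[OF z1(1)] foldr_zero[OF z1(2)] True by (simp add: pr_def dl_def)
next
  case False
  obtain as bs where d: "(dvars :: 'd list) = as @ l # bs" "l \<notin> set as" "l \<notin> set bs" "distinct as" "distinct bs"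
    "set as \<inter> set bs = {}"
    by (rule dvars_split)
  have "m \<in> set as \<or> m \<in> set bs" using dvars_props d(1) False by (metis Un_iff UNIV_I set_ConsD set_append)
  then show ?thesis
  proof
    assume "m \<in> set as"
    then obtain a1 a2 where a: "as = a1 @ m # a2" by (meson split_list)
    have "m \<notin> set a1" "m \<notin> set a2" using d(4) a by auto
    moreover have "l \<notin> set a1" "l \<notin> set a2" using d(2) a by auto
    ultimately have z: "\<forall>i\<in>set a1. pr l m i = 0" "\<forall>i\<in>set a2. pr l m i = 0" "\<forall>i\<in>set bs. pr l m i = 0"
      using d a by (auto simp: pr_def dl_def)
    show ?thesis unfolding mpartial_def d(1) a foldr_append
      using foldr_zero[OF z(1)] foldr_zero[OF z(2)] foldr_zero[OF z(3)] False sym by (simp add: pr_def dl_def)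
  next
    assume "m \<in> set bs"
    then obtain b1 b2 where b: "bs = b1 @ m # b2" by (meson split_list)
    have "m \<notin> set b1" "m \<notin> set b2" using d(5) b by auto
    moreover have "l \<notin> set b1" "l \<notin> set b2" using d(3) b by auto
    ultimately have z: "\<forall>i\<in>set b1. pr l m i = 0" "\<forall>i\<in>set b2. pr l m i = 0" "\<forall>i\<in>set as. pr l m i = 0"
      using d b by (auto simp: pr_def dl_def)
    show ?thesis unfolding mpartial_def d(1) b foldr_append
      using foldr_zero[OF z(1)] foldr_zero[OF z(2)] foldr_zero[OF z(3)] False by (simp add: pr_def dl_def)
  qed
qed

lemma dl_inj: "inj (dl :: 'd \<Rightarrow> 'd \<Rightarrow> nat)"
proof (rule injI)
  fix l m :: 'd assume "dl l = dl m"
  then have "dl l l = dl m l" by simp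
  then show "l = m" by (simp add: dl_def split: if_splits)
qed

lemma sum_dl: "(\<Sum>i\<in>UNIV. dl l i) = (1::nat)" for l :: "'d::finite"
  by (simp add: dl_def)

lemma mind1: "mindices 1 = range (dl :: 'd::finite \<Rightarrow> _)"
proof (intro set_eqI iffI)
  fix n :: "'d \<Rightarrow> nat" assume "n \<in> mindices 1"
  then have s: "(\<Sum>i\<in>UNIV. n i) = 1" by (simp add: mindices_def)
  then obtain l where l: "n l \<noteq> 0" by (metis (mono_tags, lifting) sum.neutral zero_neq_one)
  have split: "(\<Sum>i\<in>UNIV. n i) = n l + (\<Sum>i\<in>UNIV - {l}. n i)" by (simp add: sum.remove)
  then have "n l = 1" "(\<Sum>i\<in>UNIV - {l}. n i) = 0" using s l by linarith+
  then have "\<forall>i\<in>UNIV - {l}. n i = 0" by simp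
  then have "n = dl l" using \<open>n l = 1\<close> by (auto simp: dl_def)
  then show "n \<in> range dl" by simp
next
  fix n :: "'d \<Rightarrow> nat" assume "n \<in> range dl"
  then show "n \<in> mindices 1" by (auto simp: mindices_def sum_dl)
qed

lemma pr_sum: "(\<Sum>i\<in>UNIV. pr l m i) = (2::nat)" for l m :: "'d::finite"
  by (simp add: pr_def sum.distrib sum_dl)

lemma mind2: "mindices 2 = (\<lambda>p. pr (fst p) (snd p)) ` (UNIV :: ('d::finite \<times> 'd) set)"
proof (intro set_eqI iffI)
  fix n :: "'d \<Rightarrow> nat" assume "n \<in> mindices 2"
  then have s: "(\<Sum>i\<in>UNIV. n i) = 2" by (simp add: mindices_def)
  then obtain l where l: "n l \<noteq> 0" by (metis (mono_tags, lifting) sum.neutral zero_neq_numeral)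
  have split: "(\<Sum>i\<in>UNIV. n i) = n l + (\<Sum>i\<in>UNIV - {l}. n i)" by (simp add: sum.remove)
  have "n l = 2 \<or> n l = 1" using s split l by linarith
  then show "n \<in> (\<lambda>p. pr (fst p) (snd p)) ` UNIV"
  proof
    assume "n l = 2"
    then have "(\<Sum>i\<in>UNIV - {l}. n i) = 0" using s split by linarith
    then have "\<forall>i\<in>UNIV - {l}. n i = 0" by simp
    then have "n = pr l l" using \<open>n l = 2\<close> by (auto simp: pr_def dl_def)
    then show ?thesis by (auto intro!: image_eqI[of _ _ "(l, l)"])
  next
    assume "n l = 1"
    then have R: "(\<Sum>i\<in>UNIV - {l}. n i) = 1" using s split by linarith
    then obtain m where m: "m \<in> UNIV - {l}" "n m \<noteq> 0" by (metis (mono_tags, lifting) sum.neutral zero_neq_one)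
    have split2: "(\<Sum>i\<in>UNIV - {l}. n i) = n m + (\<Sum>i\<in>UNIV - {l} - {m}. n i)" using m by (simp add: sum.remove)
    then have "n m = 1" "(\<Sum>i\<in>UNIV - {l} - {m}. n i) = 0" using R m by linarith+
    then have "\<forall>i\<in>UNIV - {l} - {m}. n i = 0" by simp
    then have "n = pr l m" using \<open>n l = 1\<close> \<open>n m = 1\<close> m by (auto simp: pr_def dl_def)
    then show ?thesis by (auto intro!: image_eqI[of _ _ "(l, m)"])
  qed
next
  fix n :: "'d \<Rightarrow> nat" assume "n \<in> (\<lambda>p. pr (fst p) (snd p)) ` UNIV"
  then show "n \<in> mindices 2" by (auto simp: mindices_def pr_sum)
qed

lemma pr_eq: "pr l m = pr a b \<longleftrightarrow> (l = a \<and> m = b) \<or> (l = b \<and> m = a)"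
proof
  assume e: "pr l m = pr a b"
  have h: "pr l m l = pr a b l" "pr l m m = pr a b m" "pr l m a = pr a b a" using e by simp_all
  show "(l = a \<and> m = b) \<or> (l = b \<and> m = a)"
    using h unfolding pr_def dl_def
    by (cases "l = a"; cases "l = b"; cases "m = a"; cases "m = b"; cases "l = m"; cases "a = b"; simp)
next
  assume "(l = a \<and> m = b) \<or> (l = b \<and> m = a)"
  then show "pr l m = pr a b" by (auto simp: pr_def)
qed

lemma mpow_dl: "mpow c (dl l) = c$l"
proof -
  have "(\<Prod>i\<in>UNIV. (c$i) ^ dl l i) = (\<Prod>i\<in>UNIV. if i = l then c$i else 1)"
    by (intro prod.cong) (auto simp: dl_def)
  then show ?thesis by (simp add: mpow_def prod.delta)
qed

lemma mpow_pr: "mpow c (pr l m) = c$l * c$m"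
proof -
  have "mpow c (pr l m) = (\<Prod>i\<in>UNIV. (c$i) ^ dl l i * (c$i) ^ dl m i)"
    by (simp add: mpow_def pr_def power_add)
  also have "\<dots> = mpow c (dl l) * mpow c (dl m)" by (simp add: mpow_def prod.distrib)
  finally show ?thesis by (simp add: mpow_dl)
qed

lemma mfact_pr: "mfact (pr l m) = (if l = m then 2 else 1)"
proof (cases "l = m")
  case True
  have "(\<Prod>i\<in>UNIV. fact (pr l m i) :: real) = (\<Prod>i\<in>UNIV. if i = l then 2 else 1)"
    by (intro prod.cong) (auto simp: pr_def dl_def True)
  then show ?thesis by (simp add: mfact_def prod.delta True)
next
  case False
  have "\<And>i. fact (pr l m i) = (1::real)" by (auto simp: pr_def dl_def False)
  then show ?thesis by (simp add: mfact_def False)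
qed

lemma S1: "(\<Sum>n\<in>mindices 1. mpow c n * mpartial n F y) = (\<Sum>l\<in>UNIV. c$l * xpartial l F y)"
  unfolding mind1 by (simp add: sum.reindex[OF dl_inj] mpow_dl mpartial_single)

lemma S2:
  fixes F :: "real^'d \<Rightarrow> real"
  assumes sym: "\<And>l m. xpartial l (xpartial m F) = xpartial m (xpartial l F)"
  shows "(\<Sum>n\<in>mindices 2. mpow c n / mfact n * mpartial n F y) =
         (\<Sum>l\<in>UNIV. \<Sum>m\<in>UNIV. c$l * c$m * xpartial l (xpartial m F) y) / 2"
proof -
  let ?h = "\<lambda>p::'d \<times> 'd. pr (fst p) (snd p)"
  let ?g = "\<lambda>n. mpow c n * mpartial n F y"
  have "(\<Sum>l\<in>UNIV. \<Sum>m\<in>UNIV. c$l * c$m * xpartial l (xpartial m F) y) = (\<Sum>p\<in>UNIV. ?g (?h p))"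
  proof -
    have "(\<Sum>l\<in>UNIV. \<Sum>m\<in>UNIV. c$l * c$m * xpartial l (xpartial m F) y)
       = (\<Sum>(l,m)\<in>UNIV \<times> UNIV. c$l * c$m * xpartial l (xpartial m F) y)" by (rule sum.cartesian_product)
    also have "\<dots> = (\<Sum>p\<in>UNIV. c$fst p * c$snd p * xpartial (fst p) (xpartial (snd p) F) y)"
      by (simp add: case_prod_beta)
    also have "\<dots> = (\<Sum>p\<in>UNIV. ?g (?h p))"
      by (intro sum.cong refl) (simp add: mpow_pr mpartial_pair[OF sym])
    finally show ?thesis .
  qed
  also have "\<dots> = (\<Sum>n\<in>?h ` UNIV. \<Sum>p\<in>{p\<in>UNIV. ?h p = n}. ?g (?h p))"
    by (rule sum.image_gen) simp
  also have "\<dots> = (\<Sum>n\<in>?h ` UNIV. 2 * (mpow c n / mfact n * mpartial n F y))"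
  proof (rule sum.cong[OF refl])
    fix n assume "n \<in> ?h ` UNIV"
    then obtain a b where n: "n = pr a b" by auto
    have "{p\<in>UNIV. ?h p = n} = {(a, b), (b, a)}" using n pr_eq by fastforce
    then have "(\<Sum>p\<in>{p\<in>UNIV. ?h p = n}. ?g (?h p)) = (\<Sum>p\<in>{(a, b), (b, a)}. ?g n)"
      by (intro sum.cong) auto
    also have "\<dots> = 2 * (mpow c n / mfact n * mpartial n F y)"
      by (cases "a = b") (simp_all add: n mfact_pr)
    finally show "(\<Sum>p\<in>{p\<in>UNIV. ?h p = n}. ?g (?h p)) = 2 * (mpow c n / mfact n * mpartial n F y)" .
  qed
  also have "\<dots> = 2 * (\<Sum>n\<in>mindices 2. mpow c n / mfact n * mpartial n F y)"
    by (simp add: mind2 sum_distrib_left)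
  finally show ?thesis by simp
qed

lemma Mabs: "0 < d \<Longrightarrow> M * \<bar>d\<bar>^3 \<le> \<bar>M\<bar> * (d::real)^3"
proof -
  assume d: "0 < d"
  then have "\<bar>d\<bar> = d" by simp
  moreover have "M * d^3 \<le> \<bar>M\<bar> * d^3" using d by (intro mult_right_mono) auto
  ultimately show ?thesis by simp
qed

lemma assembly_j:
  fixes dx Fx A B a1 a2 M :: real and g :: "real \<Rightarrow> real"
  assumes dx: "0 < dx" "dx \<le> 1"
    and g: "\<forall>h. \<bar>h\<bar> \<le> 1 \<longrightarrow> \<bar>g h - Fx - a1 * h - a2 * h^2/2\<bar> \<le> M * \<bar>h\<bar>^3"
  defines "E \<equiv> g (-dx) * (dx * A + B) / 2 + g dx * (B - dx * A) / 2 - (Fx * B - A * a1 * dx^2 + B * a2 * dx^2 / 2)"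
  shows "\<bar>E\<bar> \<le> (\<bar>A\<bar> + \<bar>B\<bar>) * \<bar>M\<bar> * dx^3"
proof -
  define r where "r h = g h - Fx - a1 * h - a2 * h^2/2" for h
  have rp: "\<bar>r dx\<bar> \<le> \<bar>M\<bar> * dx^3"
  proof -
    have "\<bar>r dx\<bar> \<le> M * \<bar>dx\<bar>^3" using g[rule_format, of dx] dx unfolding r_def by auto
    also have "\<dots> \<le> \<bar>M\<bar> * dx^3" by (rule Mabs[OF dx(1)])
    finally show ?thesis .
  qed
  have rm: "\<bar>r (-dx)\<bar> \<le> \<bar>M\<bar> * dx^3"
  proof -
    have "\<bar>r (-dx)\<bar> \<le> M * \<bar>dx\<bar>^3" using g[rule_format, of "-dx"] dx unfolding r_def by auto
    also have "\<dots> \<le> \<bar>M\<bar> * dx^3" by (rule Mabs[OF dx(1)])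
    finally show ?thesis .
  qed
  have "E = dx * A / 2 * (r (-dx) - r dx) + B / 2 * (r (-dx) + r dx)"
    unfolding E_def r_def by (simp add: field_simps power2_eq_square)
  then have "\<bar>E\<bar> \<le> \<bar>dx * A / 2 * (r (-dx) - r dx)\<bar> + \<bar>B / 2 * (r (-dx) + r dx)\<bar>"
    by (simp only: abs_triangle_ineq)
  also have "\<dots> = dx * \<bar>A\<bar> / 2 * \<bar>r (-dx) - r dx\<bar> + \<bar>B\<bar> / 2 * \<bar>r (-dx) + r dx\<bar>"
    using dx by (simp add: abs_mult)
  also have "\<dots> \<le> dx * \<bar>A\<bar> / 2 * (\<bar>r (-dx)\<bar> + \<bar>r dx\<bar>) + \<bar>B\<bar> / 2 * (\<bar>r (-dx)\<bar> + \<bar>r dx\<bar>)"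
    using dx by (intro add_mono mult_left_mono abs_triangle_ineq4 abs_triangle_ineq) auto
  also have "\<dots> \<le> dx * \<bar>A\<bar> / 2 * (2 * (\<bar>M\<bar> * dx^3)) + \<bar>B\<bar> / 2 * (2 * (\<bar>M\<bar> * dx^3))"
    using rp rm dx by (intro add_mono mult_left_mono) auto
  also have "\<dots> \<le> (\<bar>A\<bar> + \<bar>B\<bar>) * \<bar>M\<bar> * dx^3"
  proof -
    have "dx * \<bar>A\<bar> * (\<bar>M\<bar> * dx^3) \<le> \<bar>A\<bar> * (\<bar>M\<bar> * dx^3)"
      using dx by (intro mult_right_mono) (auto simp: mult_left_le_one_le)
    then show ?thesis by (simp add: algebra_simps)
  qed
  finally show ?thesis .
qed

lemma abs3: "\<bar>x + y - z\<bar> \<le> \<bar>x\<bar> + \<bar>y\<bar> + \<bar>(z::real)\<bar>" by arith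

lemma assembly:
  fixes dx mu b1 b2 M0 Fx :: real and A B aa qq M :: "nat \<Rightarrow> real"
    and g :: "nat \<Rightarrow> real \<Rightarrow> real" and u :: "real \<Rightarrow> real"
  assumes dx: "0 < dx" "dx \<le> 1" "dx \<le> mu"
    and u: "\<forall>t. \<bar>t\<bar> \<le> 1 \<longrightarrow> \<bar>u t - Fx - b1 * t - b2 * t^2/2\<bar> \<le> M0 * \<bar>t\<bar>^3"
    and g: "\<forall>j\<in>{1..W}. \<forall>h. \<bar>h\<bar> \<le> 1 \<longrightarrow> \<bar>g j h - Fx - aa j * h - qq j * h^2/2\<bar> \<le> M j * \<bar>h\<bar>^3"
  shows "\<bar>(u (dx^2/mu) - (Fx * (1 - (\<Sum>j=1..W. B j)) + (\<Sum>j=1..W. g j (-dx) * (dx * A j + B j)/2 + g j dx * (B j - dx * A j)/2)))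
            / (dx^2/mu) - (b1 + mu * (\<Sum>j=1..W. A j * aa j) - mu * (\<Sum>j=1..W. B j * (qq j / 2)))\<bar>
         \<le> (\<bar>b2\<bar>/(2*mu) + \<bar>M0\<bar>/mu + mu * (\<Sum>j=1..W. (\<bar>A j\<bar> + \<bar>B j\<bar>) * \<bar>M j\<bar>)) * dx"
proof -
  have mu: "mu > 0" using dx by linarith
  define dt where "dt = dx^2/mu"
  have dt: "0 < dt" "dt \<le> 1" "dt \<le> dx/mu"
  proof -
    show "0 < dt" using dx mu by (simp add: dt_def)
    have "dx^2 \<le> dx" using dx by (simp add: power2_eq_square mult_left_le_one_le)
    then show "dt \<le> dx/mu" using mu by (simp add: dt_def divide_right_mono)
    also have "dx/mu \<le> 1" using dx mu by simp
    finally show "dt \<le> 1" .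
  qed
  define E where "E j = g j (-dx) * (dx * A j + B j) / 2 + g j dx * (B j - dx * A j) / 2 - (Fx * B j - A j * aa j * dx^2 + B j * qq j * dx^2 / 2)" for j
  have Ej: "\<bar>E j\<bar> \<le> (\<bar>A j\<bar> + \<bar>B j\<bar>) * \<bar>M j\<bar> * dx^3" if "j \<in> {1..W}" for j
    unfolding E_def by (rule assembly_j) (use dx g that in auto)
  define SB where "SB = (\<Sum>j=1..W. B j)"
  define SA where "SA = (\<Sum>j=1..W. A j * aa j)"
  define SB2 where "SB2 = (\<Sum>j=1..W. B j * qq j)"
  define SE where "SE = (\<Sum>j=1..W. E j)"
  define SM where "SM = (\<Sum>j=1..W. (\<bar>A j\<bar> + \<bar>B j\<bar>) * \<bar>M j\<bar>)"
  have sumg: "(\<Sum>j=1..W. g j (-dx) * (dx * A j + B j)/2 + g j dx * (B j - dx * A j)/2) = Fx * SB - dx^2 * SA + dx^2/2 * SB2 + SE"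
  proof -
    have "(\<Sum>j=1..W. g j (-dx) * (dx * A j + B j)/2 + g j dx * (B j - dx * A j)/2)
        = (\<Sum>j=1..W. Fx * B j - dx^2 * (A j * aa j) + dx^2/2 * (B j * qq j) + E j)"
      by (intro sum.cong refl) (simp add: E_def algebra_simps)
    also have "\<dots> = Fx * SB - dx^2 * SA + dx^2/2 * SB2 + SE"
      by (simp add: SB_def SA_def SB2_def SE_def sum.distrib sum_subtractf sum_distrib_left)
    finally show ?thesis .
  qed
  have sumB: "(\<Sum>j=1..W. B j * (qq j / 2)) = SB2 / 2" by (simp add: SB2_def sum_divide_distrib)
  define ru where "ru = u dt - Fx - b1 * dt - b2 * dt^2/2"
  have ru: "\<bar>ru\<bar> \<le> \<bar>M0\<bar> * dt^3"
  proof -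
    have "\<bar>ru\<bar> \<le> M0 * \<bar>dt\<bar>^3" using u[rule_format, of dt] dt unfolding ru_def by auto
    also have "\<dots> \<le> \<bar>M0\<bar> * dt^3" by (rule Mabs[OF dt(1)])
    finally show ?thesis .
  qed
  have expr: "(u dt - (Fx * (1 - SB) + (Fx * SB - dx^2 * SA + dx^2/2 * SB2 + SE))) / dt - (b1 + mu * SA - mu * (SB2/2))
      = b2 * dt / 2 + ru / dt - SE / dt"
    using dt(1) dx mu unfolding ru_def dt_def by (simp add: field_simps power2_eq_square)
  have SE: "\<bar>SE\<bar> \<le> SM * dx^3"
  proof -
    have "\<bar>SE\<bar> \<le> (\<Sum>j=1..W. \<bar>E j\<bar>)" unfolding SE_def by (rule sum_abs)
    also have "\<dots> \<le> (\<Sum>j=1..W. (\<bar>A j\<bar> + \<bar>B j\<bar>) * \<bar>M j\<bar> * dx^3)" by (intro sum_mono Ej)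
    also have "\<dots> = SM * dx^3" by (simp add: SM_def sum_distrib_right)
    finally show ?thesis .
  qed
  have SMpos: "SM \<ge> 0" unfolding SM_def by (intro sum_nonneg) auto
  have "\<bar>b2 * dt / 2 + ru / dt - SE / dt\<bar> \<le> \<bar>b2\<bar> * dt / 2 + \<bar>ru\<bar> / dt + \<bar>SE\<bar> / dt"
  proof -
    have "\<bar>b2 * dt / 2 + ru / dt - SE / dt\<bar> \<le> \<bar>b2 * dt / 2\<bar> + \<bar>ru / dt\<bar> + \<bar>SE / dt\<bar>" by (rule abs3)
    also have "\<dots> = \<bar>b2\<bar> * dt / 2 + \<bar>ru\<bar> / dt + \<bar>SE\<bar> / dt" using dt by (simp add: abs_mult abs_divide)
    finally show ?thesis .
  qed
  also have "\<dots> \<le> \<bar>b2\<bar> * (dx/mu) / 2 + \<bar>M0\<bar> * (dx/mu) + mu * SM * dx"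
  proof (intro add_mono)
    show "\<bar>b2\<bar> * dt / 2 \<le> \<bar>b2\<bar> * (dx/mu) / 2" using dt by (intro divide_right_mono mult_left_mono) auto
    have "\<bar>ru\<bar> / dt \<le> \<bar>M0\<bar> * dt^3 / dt" using ru dt by (intro divide_right_mono) auto
    also have "\<dots> = \<bar>M0\<bar> * (dt * dt)" using dt by (simp add: power3_eq_cube)
    also have "\<dots> \<le> \<bar>M0\<bar> * (1 * (dx/mu))" using dt by (intro mult_left_mono mult_mono) auto
    finally show "\<bar>ru\<bar> / dt \<le> \<bar>M0\<bar> * (dx/mu)" by simp
    have "\<bar>SE\<bar> / dt \<le> SM * dx^3 / dt" using SE dt by (intro divide_right_mono) auto
    also have "\<dots> = mu * SM * dx" using dx mu unfolding dt_def by (simp add: field_simps power2_eq_square power3_eq_cube)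
    finally show "\<bar>SE\<bar> / dt \<le> mu * SM * dx" .
  qed
  also have "\<dots> = (\<bar>b2\<bar>/(2*mu) + \<bar>M0\<bar>/mu + mu * SM) * dx" using mu by (simp add: field_simps)
  finally show ?thesis
    using expr unfolding dt_def[symmetric] sumg SA_def[symmetric] sumB SB_def[symmetric] SM_def[symmetric]
    by simp
qed

lemma time_taylor:
  fixes \<phi> :: "real \<times> (real^'d) \<Rightarrow> real"
  assumes sm: "smooth_fun \<phi>"
  shows "\<exists>M0 b2. \<forall>t. \<bar>t\<bar> \<le> 1 \<longrightarrow> \<bar>\<phi> (t, x) - \<phi> (0, x) - dirderiv (1, 0) \<phi> (0, x) * t - b2 * t^2/2\<bar> \<le> M0 * \<bar>t\<bar>^3"
proof -
  let ?P = "\<lambda>k t. foldr dirderiv (replicate k ((1::real), (0::real^'d))) \<phi> (t, x)"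
  have d: "\<And>k t. ((\<lambda>t. ?P k t) has_real_derivative ?P (Suc k) t) (at t)"
    using time_deriv[OF sm] by blast
  have c: "continuous_on {-1..1} (?P (Suc (Suc (Suc 0))))" using time_cont[OF sm] by blast
  have "\<exists>M. \<forall>h. \<bar>h\<bar> \<le> 1 \<longrightarrow> \<bar>?P 0 h - ?P 0 0 - ?P (Suc 0) 0 * h - ?P (Suc (Suc 0)) 0 * h^2 / 2\<bar> \<le> M * \<bar>h\<bar>^3"
    by (rule taylor3[OF d d d c])
  then show ?thesis by simp blast
qed

lemma spatial_taylor:
  fixes \<phi> :: "real \<times> (real^'d) \<Rightarrow> real" and cc x :: "real^'d"
  assumes sm: "smooth_fun \<phi>"
  shows "\<exists>M. \<forall>h. \<bar>h\<bar> \<le> 1 \<longrightarrow> \<bar>\<phi> (0, x + h *\<^sub>R cc) - \<phi> (0, x)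
     - (\<Sum>n\<in>mindices 1. mpow cc n * mpartial n (\<lambda>y. \<phi> (0, y)) x) * h
     - (2 * (\<Sum>n\<in>mindices 2. mpow cc n / mfact n * mpartial n (\<lambda>y. \<phi> (0, y)) x)) * h^2/2\<bar> \<le> M * \<bar>h\<bar>^3"
proof -
  define F where "F = (\<lambda>y. \<phi> (0, y))"
  define D where "D vs = foldr xpartial vs F" for vs
  have dD: "\<forall>l y. (\<lambda>h. D vs (y + h *\<^sub>R axis l 1)) differentiable (at 0)" for vs
    unfolding D_def F_def using F_smooth_diff[OF sm] by blast
  have cD: "continuous_on UNIV (D vs)" for vs unfolding D_def F_def using F_smooth_cont[OF sm] by blast
  have xD: "xpartial l (D vs) = D (l # vs)" for l vs by (simp add: D_def)
  have cxD: "\<forall>l. continuous_on UNIV (xpartial l (D vs))" for vs by (simp add: xD cD)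
  have lineD: "((\<lambda>t. D vs (z + t *\<^sub>R cc)) has_real_derivative (\<Sum>l\<in>UNIV. cc$l * D (l#vs) (z + t *\<^sub>R cc))) (at t)" for vs z t
    using C1_line[OF dD cxD, of vs z cc t] unfolding xD .
  define g1 where "g1 t = (\<Sum>l\<in>UNIV. cc$l * D [l] (x + t *\<^sub>R cc))" for t
  define g2 where "g2 t = (\<Sum>l\<in>UNIV. cc$l * (\<Sum>m\<in>UNIV. cc$m * D [m,l] (x + t *\<^sub>R cc)))" for t
  define g3 where "g3 t = (\<Sum>l\<in>UNIV. cc$l * (\<Sum>m\<in>UNIV. cc$m * (\<Sum>n\<in>UNIV. cc$n * D [n,m,l] (x + t *\<^sub>R cc))))" for t
  have d1: "((\<lambda>t. D [] (x + t *\<^sub>R cc)) has_real_derivative g1 t) (at t)" for t unfolding g1_def by (rule lineD)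
  have d2: "(g1 has_real_derivative g2 t) (at t)" for t
    unfolding g1_def[abs_def] g2_def by (intro DERIV_sum DERIV_cmult lineD)
  have d3: "(g2 has_real_derivative g3 t) (at t)" for t
    unfolding g2_def[abs_def] g3_def by (intro DERIV_sum DERIV_cmult lineD)
  have c3: "continuous_on {-1..1} g3"
    unfolding g3_def by (intro continuous_intros continuous_on_compose2[OF cD]) auto
  obtain M where M: "\<forall>h. \<bar>h\<bar> \<le> 1 \<longrightarrow> \<bar>D [] (x + h *\<^sub>R cc) - D [] (x + 0 *\<^sub>R cc) - g1 0 * h - g2 0 * h^2/2\<bar> \<le> M * \<bar>h\<bar>^3"
    using taylor3[OF d1 d2 d3 c3] by blast
  have sym: "xpartial l (xpartial m F) = xpartial m (xpartial l F)" for l m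
  proof (rule ext, rule schwarz)
    show "\<forall>l y. (\<lambda>h. F (y + h *\<^sub>R axis l 1)) differentiable (at 0)" using dD[of "[]"] by (simp add: D_def)
    show "\<forall>l m y. (\<lambda>h. xpartial l F (y + h *\<^sub>R axis m 1)) differentiable (at 0)"
      using dD by (metis D_def foldr.simps(1) id_apply xD)
    show "\<forall>l m. continuous_on UNIV (xpartial m (xpartial l F))"
      using cD by (metis D_def foldr.simps(1) id_apply xD)
  qed
  have a1: "g1 0 = (\<Sum>n\<in>mindices 1. mpow cc n * mpartial n F x)"
    unfolding S1 g1_def by (simp add: D_def)
  have a2: "g2 0 = 2 * (\<Sum>n\<in>mindices 2. mpow cc n / mfact n * mpartial n F x)"
    unfolding S2[OF sym] g2_def
    by (simp add: D_def sum_distrib_left mult.assoc sym mult.commute[of _ 2])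
  show ?thesis using M unfolding a1 a2 by (simp add: D_def F_def) blast
qed

theorem proposition13:
  fixes W :: nat and s \<mu> :: real
    and c :: "nat \<Rightarrow> real^'d"
    and sr :: "nat \<Rightarrow> real"
    and e w :: "nat \<Rightarrow> real"
    and \<phi> :: "real \<times> (real^'d) \<Rightarrow> real"
    and x :: "real^'d"
  assumes "1 \<le> W" and "0 < s" and "s \<le> 2" and "0 < \<mu>"
    and "c 1 = 0"
    and "\<forall>j\<in>{1..W}. c (2*j+1) = - c (2*j)"
    and "\<forall>k\<in>{1..2*W+1}. \<forall>l. c k $ l \<in> \<int>"
    and "\<forall>j\<in>{1..W}. sr (2*j) = s \<and> sr (2*j+1) = 2 - s"
    and "e 1 = 1" and "w 1 = 1"
    and "smooth_fun \<phi>"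
  shows "(\<lambda>dx. (\<phi> (dx^2 / \<mu>, x)
              - Ew_op W dx c sr (\<lambda>k. if even k then dx * e k else e k)
                               (\<lambda>k. if even k then dx * w k else w k) 1 (\<lambda>y. \<phi> (0, y)) x)
             / (dx^2 / \<mu>)
          - (dirderiv (1, 0) \<phi> (0, x)
             + \<mu> * (\<Sum>j=1..W. (s * e (2*j) + (1 - s) * w (2*j)) *
                   (\<Sum>n\<in>mindices 1. mpow (c (2*j)) n * mpartial n (\<lambda>y. \<phi> (0, y)) x))
             - \<mu> * (\<Sum>j=1..W. ((2 - s) * e (2*j+1) + (s - 1) * w (2*j+1)) *
                   (\<Sum>n\<in>mindices 2. mpow (c (2*j)) n / mfact n * mpartial n (\<lambda>y. \<phi> (0, y)) x))))
         \<in> O[at_right 0](\<lambda>dx. dx)"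
proof -
  note sm = assms(11)
  define F where "F = (\<lambda>y. \<phi> (0, y))"
  define b1 where "b1 = dirderiv (1, 0) \<phi> (0, x)"
  obtain M0 b2 where MT: "\<forall>t. \<bar>t\<bar> \<le> 1 \<longrightarrow> \<bar>\<phi> (t, x) - \<phi> (0, x) - b1 * t - b2 * t^2/2\<bar> \<le> M0 * \<bar>t\<bar>^3"
    using time_taylor[OF sm] unfolding b1_def by blast
  define S1 where "S1 j = (\<Sum>n\<in>mindices 1. mpow (c (2*j)) n * mpartial n (\<lambda>y. \<phi> (0, y)) x)" for j
  define S2 where "S2 j = (\<Sum>n\<in>mindices 2. mpow (c (2*j)) n / mfact n * mpartial n (\<lambda>y. \<phi> (0, y)) x)" for j
  have "\<forall>j\<in>{1..W}. \<exists>M. \<forall>h. \<bar>h\<bar> \<le> 1 \<longrightarrow> \<bar>\<phi> (0, x + h *\<^sub>R c (2*j)) - \<phi> (0, x) - S1 j * h - (2 * S2 j) * h^2/2\<bar> \<le> M * \<bar>h\<bar>^3"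
    using spatial_taylor[OF sm] unfolding S1_def S2_def by blast
  then obtain Mf where Mf: "\<forall>j\<in>{1..W}. \<forall>h. \<bar>h\<bar> \<le> 1 \<longrightarrow> \<bar>\<phi> (0, x + h *\<^sub>R c (2*j)) - \<phi> (0, x) - S1 j * h - (2 * S2 j) * h^2/2\<bar> \<le> Mf j * \<bar>h\<bar>^3"
    by (rule bchoice[THEN exE]) blast
  define A where "A j = s * e (2*j) + (1 - s) * w (2*j)" for j
  define B where "B j = (2 - s) * e (2*j+1) + (s - 1) * w (2*j+1)" for j
  define K where "K = \<bar>b2\<bar>/(2*\<mu>) + \<bar>M0\<bar>/\<mu> + \<mu> * (\<Sum>j=1..W. (\<bar>A j\<bar> + \<bar>B j\<bar>) * \<bar>Mf j\<bar>)"
  let ?eps = "\<lambda>k. if even k then dx * e k else e k"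
  have key: "\<bar>(\<phi> (dx^2 / \<mu>, x)
              - Ew_op W dx c sr (\<lambda>k. if even k then dx * e k else e k)
                               (\<lambda>k. if even k then dx * w k else w k) 1 (\<lambda>y. \<phi> (0, y)) x)
             / (dx^2 / \<mu>)
          - (dirderiv (1, 0) \<phi> (0, x)
             + \<mu> * (\<Sum>j=1..W. (s * e (2*j) + (1 - s) * w (2*j)) *
                   (\<Sum>n\<in>mindices 1. mpow (c (2*j)) n * mpartial n (\<lambda>y. \<phi> (0, y)) x))
             - \<mu> * (\<Sum>j=1..W. ((2 - s) * e (2*j+1) + (s - 1) * w (2*j+1)) *
                   (\<Sum>n\<in>mindices 2. mpow (c (2*j)) n / mfact n * mpartial n (\<lambda>y. \<phi> (0, y)) x)))\<bar> \<le> K * dx"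
    if dx: "0 < dx" "dx < min 1 \<mu>" for dx
  proof -
    let ?eps = "\<lambda>k. if even k then dx * e k else e k"
    let ?w = "\<lambda>k. if even k then dx * w k else w k"
    let ?u = "\<lambda>m. ?w m - sr m * (?w m - ?eps m * ?w 1)"
    have Ew0: "Ew_op W dx c sr ?eps ?w 1 (\<lambda>y. \<phi> (0, y)) x =
      \<phi> (0, x - dx *\<^sub>R c 1) * (?u 1 - (\<Sum>j=1..W. ?u (2*j+1))) +
      (\<Sum>j=1..W. \<phi> (0, x - dx *\<^sub>R c (2*j)) * ((?u (2*j) + ?u (2*j+1)) / 2)
              + \<phi> (0, x - dx *\<^sub>R c (2*j+1)) * ((?u (2*j+1) - ?u (2*j)) / 2))"
      by (rule Ew_formula)
    have u1: "?u 1 = 1" using assms(9,10) by simp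
    have u2: "?u (2*j) = dx * A j" if "j \<in> {1..W}" for j
      using assms(8) that assms(10) by (simp add: A_def algebra_simps)
    have u3: "?u (2*j+1) = B j" if "j \<in> {1..W}" for j
    proof -
      have "sr (2*j+1) = 2 - s" using assms(8) that by blast
      have ev: "\<not> even (2*j+1)" by simp
      show ?thesis unfolding \<open>sr (2*j+1) = 2 - s\<close> using assms(9,10) ev
        by (simp only: if_False if_True B_def odd_one) (simp add: algebra_simps)
    qed
    have Ew: "Ew_op W dx c sr ?eps ?w 1 (\<lambda>y. \<phi> (0, y)) x =
      \<phi> (0, x) * (1 - (\<Sum>j=1..W. B j)) +
      (\<Sum>j=1..W. \<phi> (0, x + (-dx) *\<^sub>R c (2*j)) * (dx * A j + B j) / 2 + \<phi> (0, x + dx *\<^sub>R c (2*j)) * (B j - dx * A j) / 2)"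
    proof -
      have s1: "(\<Sum>j=1..W. ?u (2*j+1)) = (\<Sum>j=1..W. B j)" using u3 by (rule sum.cong[OF refl])
      have s2: "(\<Sum>j=1..W. \<phi> (0, x - dx *\<^sub>R c (2*j)) * ((?u (2*j) + ?u (2*j+1)) / 2)
              + \<phi> (0, x - dx *\<^sub>R c (2*j+1)) * ((?u (2*j+1) - ?u (2*j)) / 2))
          = (\<Sum>j=1..W. \<phi> (0, x + (-dx) *\<^sub>R c (2*j)) * (dx * A j + B j) / 2 + \<phi> (0, x + dx *\<^sub>R c (2*j)) * (B j - dx * A j) / 2)"
      proof (rule sum.cong[OF refl])
        fix j assume j: "j \<in> {1..W}"
        have cj: "c (2*j+1) = - c (2*j)" using assms(6) j by blast
        show "\<phi> (0, x - dx *\<^sub>R c (2*j)) * ((?u (2*j) + ?u (2*j+1)) / 2)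
              + \<phi> (0, x - dx *\<^sub>R c (2*j+1)) * ((?u (2*j+1) - ?u (2*j)) / 2)
          = \<phi> (0, x + (-dx) *\<^sub>R c (2*j)) * (dx * A j + B j) / 2 + \<phi> (0, x + dx *\<^sub>R c (2*j)) * (B j - dx * A j) / 2"
          unfolding u2[OF j] u3[OF j] cj by simp
      qed
      show ?thesis unfolding Ew0 u1 s1 s2 using assms(5) by simp
    qed
    have dxs: "0 < dx" "dx \<le> 1" "dx \<le> \<mu>" using dx by auto
    have as: "\<bar>(\<phi> (dx^2/\<mu>, x) - (\<phi> (0, x) * (1 - (\<Sum>j=1..W. B j)) + (\<Sum>j=1..W. \<phi> (0, x + (-dx) *\<^sub>R c (2*j)) * (dx * A j + B j)/2 + \<phi> (0, x + dx *\<^sub>R c (2*j)) * (B j - dx * A j)/2)))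
            / (dx^2/\<mu>) - (b1 + \<mu> * (\<Sum>j=1..W. A j * S1 j) - \<mu> * (\<Sum>j=1..W. B j * ((2 * S2 j) / 2)))\<bar>
         \<le> K * dx"
      unfolding K_def
      by (rule assembly[where u="\<lambda>t. \<phi> (t, x)" and g="\<lambda>j h. \<phi> (0, x + h *\<^sub>R c (2*j))" and qq="\<lambda>j. 2 * S2 j", OF dxs MT Mf])
    show ?thesis using as unfolding Ew A_def[symmetric] B_def[symmetric] S1_def[symmetric] S2_def[symmetric] b1_def[symmetric]
      by simp
  qed
  have ev: "eventually (\<lambda>dx. 0 < dx \<and> dx < min 1 \<mu>) (at_right (0::real))"
    unfolding eventually_at_right_field using assms(4) by (intro exI[of _ "min 1 \<mu>"]) auto
  show ?thesis
    apply (rule bigoI[where c=K])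
    apply (rule eventually_mono[OF ev])
    using key by auto
qed

end
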